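(* Let $(S,\ast)$ be an adequate partial semigroup and let $p\in\delta S$. Then $p$ is an idempotent if and only if for each $A\in p$ there is a nonempty set $T$ of functions such that (a) for all $f\in T$, $\mathrm{domain}(f)\in\omega$ and $\mathrm{range}(f)\subseteq A$; (b) for all $f\in T$, $B_f(T)\in p$; (c) for all $f\in T$ and all $x\in B_f(T)$, $B_{f^\frown x}(T)\subseteq x^{-1}B_f(T)$.
   Context: A partial semigroup is a pair $(S,\ast)$ where $\ast$ is an operation defined on a subset of $S\times S$ such that $(x\ast y)\ast z=x\ast(y\ast z)$ in the sense that if either side is defined, so is the other and they are equal. $\phi_S(s)=\{t: s\ast t\text{ defined}\}$, $\sigma_S(H)=\bigcap_{s\in H}\phi_S(s)$ for finite nonempty $H\subseteq S$; $S$ is adequate if all $\sigma_S(H)\ne\emptyset$. $\delta S=\bigcap_{x\in S}\overline{\phi_S(x)}$ is the set of ultrafilters on $S$ containing every $\phi_S(x)$, with operation $p\ast q=\{A\subseteq S:\{s: s^{-1}A\in q\}\in p\}$, where $s^{-1}A=\{t\in\phi_S(s): s\ast t\in A\}$; this makes $\delta S$ a semigroup. $\omega$ is the first infinite ordinal, each ordinal being the set of its predecessors, so $[n]=\{0,\dots,n-1\}$. For a function $f$ with domain $[n]\in\omega$ and $x\in S$, $f^\frown x=f\cup\{(n,x)\}$ (domain $[n+1]$, with $f^\frown x(n)=x$). For a set $T$ of functions with domains in $\omega$ and values in $S$, and $f\in T$, $B_f(T)=\{x: f^\frown x\in T\}$. *)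

theory Defs
  imports Main
begin

text \<open>A partial operation on the ambient type 'a (which plays the role of S):
  op x y = None means x * y is undefined.\<close>

definition partial_semigroup :: "('a \<Rightarrow> 'a \<Rightarrow> 'a option) \<Rightarrow> bool" where
  "partial_semigroup op \<longleftrightarrow>
     (\<forall>x y z. Option.bind (op x y) (\<lambda>u. op u z) = Option.bind (op y z) (\<lambda>v. op x v))"

definition phiS :: "('a \<Rightarrow> 'a \<Rightarrow> 'a option) \<Rightarrow> 'a \<Rightarrow> 'a set" where
  "phiS op s = {t. op s t \<noteq> None}"

definition sigmaS :: "('a \<Rightarrow> 'a \<Rightarrow> 'a option) \<Rightarrow> 'a set \<Rightarrow> 'a set" where
  "sigmaS op H = (\<Inter>s\<in>H. phiS op s)"

definition adequate :: "('a \<Rightarrow> 'a \<Rightarrow> 'a option) \<Rightarrow> bool" where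
  "adequate op \<longleftrightarrow> (\<forall>H. finite H \<and> H \<noteq> {} \<longrightarrow> sigmaS op H \<noteq> {})"

definition is_ultrafilter :: "'a set set \<Rightarrow> bool" where
  "is_ultrafilter p \<longleftrightarrow>
     UNIV \<in> p \<and> {} \<notin> p \<and>
     (\<forall>A B. A \<in> p \<and> A \<subseteq> B \<longrightarrow> B \<in> p) \<and>
     (\<forall>A B. A \<in> p \<and> B \<in> p \<longrightarrow> A \<inter> B \<in> p) \<and>
     (\<forall>A. A \<in> p \<or> - A \<in> p)"

definition deltaS :: "('a \<Rightarrow> 'a \<Rightarrow> 'a option) \<Rightarrow> 'a set set set" where
  "deltaS op = {p. is_ultrafilter p \<and> (\<forall>x. phiS op x \<in> p)}"

definition inv_left :: "('a \<Rightarrow> 'a \<Rightarrow> 'a option) \<Rightarrow> 'a \<Rightarrow> 'a set \<Rightarrow> 'a set" where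
  "inv_left op s A = {t \<in> phiS op s. the (op s t) \<in> A}"

definition uf_prod :: "('a \<Rightarrow> 'a \<Rightarrow> 'a option) \<Rightarrow> 'a set set \<Rightarrow> 'a set set \<Rightarrow> 'a set set" where
  "uf_prod op p q = {A. {s. inv_left op s A \<in> q} \<in> p}"

text \<open>Functions with domain [n] into 'a are represented as lists of length n;
  f\<frown>x is f @ [x].  B_f(T) = {x. f\<frown>x \<in> T}.\<close>
definition Bset :: "'a list set \<Rightarrow> 'a list \<Rightarrow> 'a set" where
  "Bset T f = {x. f @ [x] \<in> T}"

end

theory Submission
  imports Defs
begin

definition starp :: "('a \<Rightarrow> 'a \<Rightarrow> 'a option) \<Rightarrow> 'a set set \<Rightarrow> 'a set \<Rightarrow> 'a set" where
  "starp op p C = {y \<in> C. inv_left op y C \<in> p}"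

fun Gs :: "('a \<Rightarrow> 'a \<Rightarrow> 'a option) \<Rightarrow> 'a set set \<Rightarrow> 'a set \<Rightarrow> 'a list \<Rightarrow> 'a set" where
  "Gs op p A [] = starp op p A"
| "Gs op p A (x # r) = starp op p (inv_left op x (Gs op p A r) \<inter> Gs op p A r)"

inductive_set Tr :: "('a \<Rightarrow> 'a \<Rightarrow> 'a option) \<Rightarrow> 'a set set \<Rightarrow> 'a set \<Rightarrow> 'a list set"
  for op p A where
  Nil: "[] \<in> Tr op p A"
| Snoc: "f \<in> Tr op p A \<Longrightarrow> x \<in> Gs op p A (rev f) \<Longrightarrow> f @ [x] \<in> Tr op p A"

lemma Tr_snoc: "f @ [x] \<in> Tr op p A \<longleftrightarrow> f \<in> Tr op p A \<and> x \<in> Gs op p A (rev f)"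
  by (auto elim: Tr.cases intro: Tr.Snoc)

lemma uf_mono: "is_ultrafilter p \<Longrightarrow> A \<in> p \<Longrightarrow> A \<subseteq> B \<Longrightarrow> B \<in> p"
  unfolding is_ultrafilter_def by blast

lemma uf_int: "is_ultrafilter p \<Longrightarrow> A \<in> p \<Longrightarrow> B \<in> p \<Longrightarrow> A \<inter> B \<in> p"
  unfolding is_ultrafilter_def by blast

lemma assoc_inv:
  assumes "partial_semigroup op" "op x y = Some u"
  shows "inv_left op y (inv_left op x A) = inv_left op u A"
proof -
  have e: "op u t = Option.bind (op y t) (op x)" for t
    using assms unfolding partial_semigroup_def
    by (metis bind.simps(2))
  show ?thesis
    unfolding inv_left_def phiS_def
    by (auto simp: e split: Option.bind_splits)
qed

lemma star_sub: "starp op p C \<subseteq> C" unfolding starp_def by auto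

lemma star_in:
  assumes "uf_prod op p p = p" "is_ultrafilter p" "C \<in> p"
  shows "starp op p C \<in> p"
proof -
  have "{s. inv_left op s C \<in> p} \<in> p" using assms unfolding uf_prod_def by blast
  from uf_int[OF assms(2) assms(3) this] have "C \<inter> {s. inv_left op s C \<in> p} \<in> p" .
  moreover have "starp op p C = C \<inter> {s. inv_left op s C \<in> p}" unfolding starp_def by auto
  ultimately show ?thesis by simp
qed

lemma star_inv:
  assumes "uf_prod op p p = p" "is_ultrafilter p" "partial_semigroup op"
    and x: "x \<in> starp op p C"
  shows "inv_left op x (starp op p C) \<in> p"
proof -
  have xc: "inv_left op x C \<in> p" using x unfolding starp_def by auto
  hence "{y. inv_left op y (inv_left op x C) \<in> p} \<in> p"
    using assms(1) unfolding uf_prod_def by blast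
  from uf_int[OF assms(2) xc this]
  have D: "inv_left op x C \<inter> {y. inv_left op y (inv_left op x C) \<in> p} \<in> p" .
  have "inv_left op x C \<inter> {y. inv_left op y (inv_left op x C) \<in> p} \<subseteq> inv_left op x (starp op p C)"
  proof
    fix y assume y: "y \<in> inv_left op x C \<inter> {y. inv_left op y (inv_left op x C) \<in> p}"
    then obtain u where u: "op x y = Some u" unfolding inv_left_def phiS_def by auto
    have uc: "u \<in> C" using y u unfolding inv_left_def by auto
    have "inv_left op u C \<in> p" using y assoc_inv[OF assms(3) u] by auto
    then show "y \<in> inv_left op x (starp op p C)" using uc u
      unfolding inv_left_def phiS_def starp_def by auto
  qed
  from uf_mono[OF assms(2) D this] show ?thesis .
qed

lemma G_props:
  assumes "uf_prod op p p = p" "is_ultrafilter p" "partial_semigroup op" "A \<in> p"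
  shows "f \<in> Tr op p A \<Longrightarrow> Gs op p A (rev f) \<in> p \<and> Gs op p A (rev f) \<subseteq> A"
proof (induction rule: Tr.induct)
  case Nil
  then show ?case using star_in[OF assms(1,2,4)] star_sub[of op p A] by simp
next
  case (Snoc f x)
  let ?G = "Gs op p A (rev f)"
  have "?G = starp op p (if rev f = [] then A else
     inv_left op (hd (rev f)) (Gs op p A (tl (rev f))) \<inter> Gs op p A (tl (rev f)))"
    by (cases "rev f") auto
  then obtain C where C: "?G = starp op p C" by blast
  have "inv_left op x ?G \<in> p" using star_inv[OF assms(1-3)] Snoc C by metis
  hence "inv_left op x ?G \<inter> ?G \<in> p" using uf_int[OF assms(2)] Snoc by blast
  hence "Gs op p A (x # rev f) \<in> p" using star_in[OF assms(1,2)] by simp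
  moreover have "Gs op p A (x # rev f) \<subseteq> A" using star_sub[of op p "inv_left op x ?G \<inter> ?G"] Snoc
    by auto
  ultimately show ?case by simp
qed

lemma Tr_set:
  assumes "uf_prod op p p = p" "is_ultrafilter p" "partial_semigroup op" "A \<in> p"
  shows "f \<in> Tr op p A \<Longrightarrow> set f \<subseteq> A"
proof (induction rule: Tr.induct)
  case Nil then show ?case by simp
next
  case (Snoc f x) then show ?case using G_props[OF assms] by auto
qed

theorem lemma4p3:
  fixes op :: "'a \<Rightarrow> 'a \<Rightarrow> 'a option" and p :: "'a set set"
  assumes "partial_semigroup op" and "adequate op" and "p \<in> deltaS op"
  shows "uf_prod op p p = p \<longleftrightarrow>
    (\<forall>A\<in>p. \<exists>T :: 'a list set. T \<noteq> {} \<and>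
        (\<forall>f\<in>T. set f \<subseteq> A) \<and>
        (\<forall>f\<in>T. Bset T f \<in> p) \<and>
        (\<forall>f\<in>T. \<forall>x\<in>Bset T f. Bset T (f @ [x]) \<subseteq> inv_left op x (Bset T f)))"
proof -
  have uf: "is_ultrafilter p" using assms(3) unfolding deltaS_def by auto
  show ?thesis
  proof
    assume idem: "uf_prod op p p = p"
    show "\<forall>A\<in>p. \<exists>T :: 'a list set. T \<noteq> {} \<and>
        (\<forall>f\<in>T. set f \<subseteq> A) \<and>
        (\<forall>f\<in>T. Bset T f \<in> p) \<and>
        (\<forall>f\<in>T. \<forall>x\<in>Bset T f. Bset T (f @ [x]) \<subseteq> inv_left op x (Bset T f))"
    proof
      fix A assume A: "A \<in> p"
      let ?T = "Tr op p A"
      have B: "Bset ?T f = Gs op p A (rev f)" if "f \<in> ?T" for f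
        using that by (simp add: Bset_def Tr_snoc)
      show "\<exists>T :: 'a list set. T \<noteq> {} \<and>
        (\<forall>f\<in>T. set f \<subseteq> A) \<and>
        (\<forall>f\<in>T. Bset T f \<in> p) \<and>
        (\<forall>f\<in>T. \<forall>x\<in>Bset T f. Bset T (f @ [x]) \<subseteq> inv_left op x (Bset T f))"
      proof (intro exI conjI ballI)
        show "?T \<noteq> {}" using Tr.Nil by blast
      next
        fix f assume "f \<in> ?T" then show "set f \<subseteq> A" by (rule Tr_set[OF idem uf assms(1) A])
      next
        fix f assume f: "f \<in> ?T"
        have "Gs op p A (rev f) \<in> p" using G_props[OF idem uf assms(1) A f] by simp
        then show "Bset ?T f \<in> p" using B[OF f] by simp
      next
        fix f x assume f: "f \<in> ?T" and x: "x \<in> Bset ?T f"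
        have fx: "f @ [x] \<in> ?T" using x unfolding Bset_def by auto
        show "Bset ?T (f @ [x]) \<subseteq> inv_left op x (Bset ?T f)"
        proof -
          have "Bset ?T (f @ [x]) = starp op p (inv_left op x (Gs op p A (rev f)) \<inter> Gs op p A (rev f))"
            using B[OF fx] by simp
          also have "\<dots> \<subseteq> inv_left op x (Gs op p A (rev f))" by (rule order_trans[OF star_sub Int_lower1])
          also have "\<dots> = inv_left op x (Bset ?T f)" using B[OF f] by simp
          finally show ?thesis .
        qed
      qed
    qed
  next
    assume H: "\<forall>A\<in>p. \<exists>T :: 'a list set. T \<noteq> {} \<and>
        (\<forall>f\<in>T. set f \<subseteq> A) \<and>
        (\<forall>f\<in>T. Bset T f \<in> p) \<and>
        (\<forall>f\<in>T. \<forall>x\<in>Bset T f. Bset T (f @ [x]) \<subseteq> inv_left op x (Bset T f))"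
    have sub: "p \<subseteq> uf_prod op p p"
    proof
      fix A assume A: "A \<in> p"
      from bspec[OF H A] obtain T :: "'a list set" where T: "T \<noteq> {}" "\<forall>f\<in>T. set f \<subseteq> A"
        "\<forall>f\<in>T. Bset T f \<in> p"
        "\<forall>f\<in>T. \<forall>x\<in>Bset T f. Bset T (f @ [x]) \<subseteq> inv_left op x (Bset T f)"
        by (elim exE conjE)
      obtain f where f: "f \<in> T" using T(1) by (meson ex_in_conv)
      let ?B = "Bset T f"
      have Bp: "?B \<in> p" using T(3) f by (rule bspec)
      have BA: "?B \<subseteq> A"
      proof
        fix x assume "x \<in> ?B"
        hence "f @ [x] \<in> T" unfolding Bset_def by simp
        hence "set (f @ [x]) \<subseteq> A" by (rule bspec[OF T(2)])
        thus "x \<in> A" by simp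
      qed
      have "?B \<subseteq> {s. inv_left op s A \<in> p}"
      proof
        fix x assume x: "x \<in> ?B"
        hence fx: "f @ [x] \<in> T" unfolding Bset_def by auto
        have "Bset T (f @ [x]) \<in> p" using T(3) fx by blast
        moreover have "Bset T (f @ [x]) \<subseteq> inv_left op x A"
        proof -
          have "Bset T (f @ [x]) \<subseteq> inv_left op x ?B" using T(4) f x by simp
          also have "\<dots> \<subseteq> inv_left op x A" using BA unfolding inv_left_def by auto
          finally show ?thesis .
        qed
        ultimately show "x \<in> {s. inv_left op s A \<in> p}" using uf_mono[OF uf] by blast
      qed
      then show "A \<in> uf_prod op p p" unfolding uf_prod_def using uf_mono[OF uf Bp] by blast
    qed
    show "uf_prod op p p = p"
    proof
      show "uf_prod op p p \<subseteq> p"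
      proof
        fix A assume A: "A \<in> uf_prod op p p"
        show "A \<in> p"
        proof (rule ccontr)
          assume "A \<notin> p"
          hence "- A \<in> p" using uf unfolding is_ultrafilter_def by blast
          hence nA: "{s. inv_left op s (- A) \<in> p} \<in> p" using sub unfolding uf_prod_def by blast
          have "{s. inv_left op s A \<in> p} \<in> p" using A unfolding uf_prod_def by blast
          from uf_int[OF uf this nA] have "{s. inv_left op s A \<in> p \<and> inv_left op s (- A) \<in> p} \<in> p"
            by (simp add: Collect_conj_eq)
          moreover have "{s. inv_left op s A \<in> p \<and> inv_left op s (- A) \<in> p} = {}"
          proof -
            have e: "inv_left op s A \<inter> inv_left op s (- A) = {}" for s
              unfolding inv_left_def by auto
            have ne: "{} \<notin> p" using uf unfolding is_ultrafilter_def by blast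
            have "\<not> (inv_left op s A \<in> p \<and> inv_left op s (- A) \<in> p)" for s
            proof
              assume "inv_left op s A \<in> p \<and> inv_left op s (- A) \<in> p"
              hence "inv_left op s A \<inter> inv_left op s (- A) \<in> p" using uf_int[OF uf] by blast
              thus False using e ne by simp
            qed
            thus ?thesis by blast
          qed
          ultimately show False using uf unfolding is_ultrafilter_def by simp
        qed
      qed
    qed (rule sub)
  qed
qed

end
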